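(* Let $\mathbf{X}\in\{0,1\}^{m\times n}$ and let $C\subseteq\mathrm{supp}(\mathbf{X})$ be the vertex set of an odd hole of size $|C|=2k+1$ in $\mathcal{G}(\mathbf{X})$, and suppose $Q:=\mathrm{supp}(\mathbf{X})\setminus C$ is nonempty. Then $i(\mathcal{S}^Q(\mathbf{X}))=k+|Q|$ and $br(\mathcal{S}^Q(\mathbf{X}))=k+1+|Q|$; in particular $\mathcal{S}^Q(\mathbf{X})$ is not firm.
   Context: For a binary matrix $\mathbf{X}$, $\mathrm{supp}(\mathbf{X})=\{(i,j):x_{i,j}=1\}$; a rectangle is a set $I\times J\subseteq\mathrm{supp}(\mathbf{X})$. An isolated set is a subset of $\mathrm{supp}(\mathbf{X})$ no two distinct elements of which lie in a common rectangle; $i(\mathbf{X})$ is its maximum size, and $br(\mathbf{X})$ is the minimum number of rectangles whose union is $\mathrm{supp}(\mathbf{X})$. $\mathbf{X}$ is firm if $i(\mathbf{X}')=br(\mathbf{X}')$ for every submatrix $\mathbf{X}'$ (including $\mathbf{X}$). The rectangle cover graph $\mathcal{G}(\mathbf{X})$ has vertex set $\mathrm{supp}(\mathbf{X})$, two vertices adjacent iff some rectangle contains both. An odd hole is an induced chordless cycle of odd length at least $5$. Stretching: for nonempty $Q=\{(\ell_1,k_1),\dots,(\ell_q,k_q)\}\subseteq\mathrm{supp}(\mathbf{X})$ listed in lexicographic order, $\mathcal{S}^Q(\mathbf{X})$ is the $(m+q)\times(n+q)$ binary matrix whose top-left $m\times n$ block is $\mathbf{X}$, whose entries at $(\ell_t,n+t)$,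 $(m+t,k_t)$, $(m+t,n+t)$ equal $1$ for each $t\in[q]$, and all of whose other entries are $0$. *)

theory Defs
  imports Main "HOL-Library.Product_Lexorder"
begin

text \<open>A binary m x n matrix is modelled as a Boolean function on index pairs
  (0-indexed); only entries with row < m and column < n matter.\<close>

definition supp :: "nat \<Rightarrow> nat \<Rightarrow> (nat \<Rightarrow> nat \<Rightarrow> bool) \<Rightarrow> (nat \<times> nat) set" where
  "supp m n X = {(i, j). i < m \<and> j < n \<and> X i j}"

definition rectangle :: "(nat \<times> nat) set \<Rightarrow> (nat \<times> nat) set \<Rightarrow> bool" where
  "rectangle S R \<longleftrightarrow> (\<exists>I J. R = I \<times> J) \<and> R \<subseteq> S"

definition isolated_set :: "(nat \<times> nat) set \<Rightarrow> (nat \<times> nat) set \<Rightarrow> bool" where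
  "isolated_set S A \<longleftrightarrow> A \<subseteq> S \<and>
     (\<forall>x\<in>A. \<forall>y\<in>A. x \<noteq> y \<longrightarrow> \<not> (\<exists>R. rectangle S R \<and> x \<in> R \<and> y \<in> R))"

definition isol_num :: "(nat \<times> nat) set \<Rightarrow> nat" where
  "isol_num S = Max {card A | A. isolated_set S A}"

definition rect_cover_num :: "(nat \<times> nat) set \<Rightarrow> nat" where
  "rect_cover_num S = Min {card F | F. finite F \<and> (\<forall>R\<in>F. rectangle S R) \<and> \<Union>F = S}"

definition firm :: "nat \<Rightarrow> nat \<Rightarrow> (nat \<Rightarrow> nat \<Rightarrow> bool) \<Rightarrow> bool" where
  "firm m n X \<longleftrightarrow> (\<forall>I J. I \<subseteq> {..<m} \<longrightarrow> J \<subseteq> {..<n} \<longrightarrow>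
      isol_num (supp m n X \<inter> (I \<times> J)) = rect_cover_num (supp m n X \<inter> (I \<times> J)))"

definition rc_adj :: "(nat \<times> nat) set \<Rightarrow> nat \<times> nat \<Rightarrow> nat \<times> nat \<Rightarrow> bool" where
  "rc_adj S x y \<longleftrightarrow> x \<in> S \<and> y \<in> S \<and> x \<noteq> y \<and> (\<exists>R. rectangle S R \<and> x \<in> R \<and> y \<in> R)"

definition odd_hole :: "(nat \<times> nat) set \<Rightarrow> (nat \<times> nat) set \<Rightarrow> bool" where
  "odd_hole S C \<longleftrightarrow> (\<exists>vs. distinct vs \<and> set vs = C \<and> C \<subseteq> S \<and>
      odd (length vs) \<and> length vs \<ge> 5 \<and>
      (\<forall>i < length vs. \<forall>j < length vs.
         rc_adj S (vs ! i) (vs ! j) \<longleftrightarrow>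
           (j = Suc i mod length vs \<or> i = Suc j mod length vs)))"

text \<open>Stretching: Q listed in lexicographic order as (l_t,k_t), t = 0..q-1 (0-indexed);
  result is an (m+q) x (n+q) matrix.\<close>

definition stretch :: "nat \<Rightarrow> nat \<Rightarrow> (nat \<Rightarrow> nat \<Rightarrow> bool) \<Rightarrow> (nat \<times> nat) set
    \<Rightarrow> nat \<Rightarrow> nat \<Rightarrow> bool" where
  "stretch m n X Q i j =
     (if i < m \<and> j < n then X i j
      else (let qs = sorted_list_of_set Q in
        \<exists>t < length qs. (i = fst (qs ! t) \<and> j = n + t) \<or> (i = m + t \<and> j = snd (qs ! t))
                        \<or> (i = m + t \<and> j = n + t)))"

end

theory Submission
  imports Defs
begin



lemma modSuc: "i < L \<Longrightarrow> Suc i mod L = (if Suc i = L then 0 else Suc i)"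
  by auto

lemma tri: "4 \<le> L \<Longrightarrow> i<L \<Longrightarrow> j<L \<Longrightarrow> l<L \<Longrightarrow> i\<noteq>j \<Longrightarrow> j\<noteq>l \<Longrightarrow> i\<noteq>l \<Longrightarrow>
  (j = Suc i mod L \<or> i = Suc j mod L) \<Longrightarrow> (l = Suc j mod L \<or> j = Suc l mod L) \<Longrightarrow>
  (l = Suc i mod L \<or> i = Suc l mod L) \<Longrightarrow> False"
  by (simp add: modSuc split: if_splits; linarith)

lemma indep_cycle:
  assumes "IA \<subseteq> {..<L}" "\<forall>i\<in>IA. Suc i mod L \<notin> IA" "L = 2*k+1"
  shows "card IA \<le> k"
proof -
  have inj: "inj_on (\<lambda>i. Suc i mod L) IA"
  proof (rule inj_onI)
    fix x y assume "x \<in> IA" "y \<in> IA" "Suc x mod L = Suc y mod L"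
    moreover have "x < L" "y < L" using assms(1) \<open>x \<in> IA\<close> \<open>y \<in> IA\<close> by auto
    ultimately show "x = y" by (simp add: modSuc split: if_splits)
  qed
  have sub: "(\<lambda>i. Suc i mod L) ` IA \<subseteq> {..<L} - IA" using assms by auto
  have fin: "finite IA" using assms(1) finite_subset by blast
  have "card IA + card ((\<lambda>i. Suc i mod L) ` IA) = card (IA \<union> (\<lambda>i. Suc i mod L) ` IA)"
    using sub fin by (subst card_Un_disjoint) auto
  also have "\<dots> \<le> card {..<L}" using sub assms(1) by (intro card_mono) auto
  finally have "card IA + card IA \<le> L" using card_image[OF inj] by simp
  thus ?thesis using assms(3) by simp
qed

lemma count_cover:
  assumes "finite F" "P \<subseteq> \<Union>F" "\<And>R. R\<in>F \<Longrightarrow> card (R \<inter> P) \<le> c" "finite P"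
  shows "card P \<le> c * card F"
proof -
  have "P = (\<Union>R\<in>F. R \<inter> P)" using assms(2) by auto
  hence "card P \<le> (\<Sum>R\<in>F. card (R \<inter> P))" using card_UN_le[OF assms(1)] by metis
  also have "\<dots> \<le> (\<Sum>R\<in>F. c)" by (rule sum_mono) (rule assms(3))
  finally show ?thesis by (simp add: mult.commute)
qed




lemma finite_supp: "finite (supp m n X)"
  by (rule finite_subset[of _ "{..<m} \<times> {..<n}"]) (auto simp: supp_def)

locale hs =
  fixes m n :: nat and X :: "nat \<Rightarrow> nat \<Rightarrow> bool" and C Q :: "(nat \<times> nat) set" and k :: nat
    and vs :: "(nat \<times> nat) list"
  assumes dist: "distinct vs" and setvs: "set vs = C" and CS: "C \<subseteq> supp m n X"
    and len: "length vs = 2*k+1" and len5: "length vs \<ge> 5"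
    and adj: "\<forall>i<length vs. \<forall>j<length vs. rc_adj (supp m n X) (vs!i) (vs!j) \<longleftrightarrow>
           (j = Suc i mod length vs \<or> i = Suc j mod length vs)"
    and Qdef: "Q = supp m n X - C"
begin

abbreviation "S \<equiv> supp m n X"
abbreviation "qs \<equiv> sorted_list_of_set Q"
abbreviation "q \<equiv> card Q"
abbreviation "T \<equiv> supp (m+q) (n+q) (stretch m n X Q)"
abbreviation "G t \<equiv> {fst (qs!t), m+t} \<times> {snd (qs!t), n+t}"
abbreviation "L \<equiv> length vs"

lemma finQ: "finite Q" using Qdef finite_supp by auto
lemma lenqs: "length qs = q" using finQ by simp
lemma setqs: "set qs = Q" using finQ by simp
lemma qsQ: "t < q \<Longrightarrow> qs!t \<in> Q" using lenqs setqs nth_mem by metis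
lemma qsS: "t < q \<Longrightarrow> fst (qs!t) < m \<and> snd (qs!t) < n \<and> X (fst (qs!t)) (snd (qs!t)) \<and> qs!t \<notin> C"
  using qsQ[of t] Qdef by (auto simp: supp_def)

lemma T_iff: "p \<in> T \<longleftrightarrow> p \<in> S \<or> (\<exists>t<q. p = (fst (qs!t), n+t) \<or> p = (m+t, snd (qs!t)) \<or> p = (m+t, n+t))"
proof (cases p)
  case (Pair i j)
  show ?thesis
  proof
    assume "p \<in> T"
    then have ij: "i < m+q" "j < n+q" "stretch m n X Q i j" using Pair by (auto simp: supp_def)
    show "p \<in> S \<or> (\<exists>t<q. p = (fst (qs!t), n+t) \<or> p = (m+t, snd (qs!t)) \<or> p = (m+t, n+t))"
    proof (cases "i < m \<and> j < n")
      case True thus ?thesis using ij Pair by (auto simp: supp_def stretch_def)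
    next
      case False thus ?thesis using ij Pair lenqs by (auto simp: stretch_def Let_def)
    qed
  next
    assume "p \<in> S \<or> (\<exists>t<q. p = (fst (qs!t), n+t) \<or> p = (m+t, snd (qs!t)) \<or> p = (m+t, n+t))"
    then show "p \<in> T"
    proof
      assume "p \<in> S" thus ?thesis using Pair by (auto simp: supp_def stretch_def)
    next
      assume "\<exists>t<q. p = (fst (qs!t), n+t) \<or> p = (m+t, snd (qs!t)) \<or> p = (m+t, n+t)"
      then obtain t where t: "t<q" "p = (fst (qs!t), n+t) \<or> p = (m+t, snd (qs!t)) \<or> p = (m+t, n+t)" by blast
      show ?thesis using t qsS[OF t(1)] lenqs Pair unfolding supp_def stretch_def Let_def
        by (elim disjE) auto
    qed
  qed
qed

lemma ST: "S \<subseteq> T" using T_iff by blast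

lemma T_low: "(i,j) \<in> T \<Longrightarrow> i < m \<Longrightarrow> j < n \<Longrightarrow> (i,j) \<in> S"
  using qsS unfolding T_iff by auto

lemma G_sub: "t < q \<Longrightarrow> G t \<subseteq> T"
  using qsS[of t] T_iff[of "qs!t"] qsQ[of t] Qdef T_iff by auto

lemma T_row: "(i,j) \<in> T \<Longrightarrow> i \<ge> m \<Longrightarrow> i - m < q \<and> (j = snd (qs!(i-m)) \<or> j = n + (i-m))"
  unfolding T_iff by (force simp: supp_def dest: qsS)

lemma T_col: "(i,j) \<in> T \<Longrightarrow> j \<ge> n \<Longrightarrow> j - n < q \<and> (i = fst (qs!(j-n)) \<or> i = m + (j-n))"
  unfolding T_iff by (force simp: supp_def dest: qsS)

lemma rect_cor:
  assumes "rectangle T R" "(m+t, n+t) \<in> R" "t < q"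
  shows "R \<subseteq> G t"
proof
  fix p assume "p \<in> R"
  obtain I J where R: "R = I \<times> J" "R \<subseteq> T" using assms(1) by (auto simp: rectangle_def)
  obtain a b where p: "p = (a,b)" by (cases p)
  have "(m+t, b) \<in> T" "(a, n+t) \<in> T" using R assms(2) \<open>p \<in> R\<close> p by auto
  from T_row[OF this(1)] T_col[OF this(2)] show "p \<in> G t" using p by auto
qed

lemma GC: "t < q \<Longrightarrow> G t \<inter> C = {}"
  using qsS[of t] CS by (auto simp: supp_def)

lemma G_cor: assumes "t < q" "(m+t', n+t') \<in> G t" shows "t' = t"
proof -
  have "m+t' = fst(qs!t) \<or> m+t' = m+t" using assms(2) by (auto simp: prod_eq_iff)
  thus ?thesis using qsS[OF assms(1)] by auto
qed

lemma rectT_S: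
  assumes "rectangle T R" "a \<in> R" "b \<in> R" "a \<in> S" "b \<in> S"
  shows "\<exists>R'. rectangle S R' \<and> a \<in> R' \<and> b \<in> R'"
proof -
  obtain I J where R: "R = I \<times> J" "R \<subseteq> T" using assms(1) by (auto simp: rectangle_def)
  let ?R = "(I \<inter> {..<m}) \<times> (J \<inter> {..<n})"
  have "?R \<subseteq> S" using R T_low by auto
  moreover have "a \<in> ?R" "b \<in> ?R" using assms R by (auto simp: supp_def)
  ultimately show ?thesis unfolding rectangle_def by blast
qed

lemma rectS_T: "rectangle S R \<Longrightarrow> rectangle T R"
  using ST by (auto simp: rectangle_def)

lemma LC: "L = card C" using dist setvs distinct_card by metis

lemma vsC: "i < L \<Longrightarrow> vs!i \<in> C" using setvs nth_mem by blast

lemma idx: "c \<in> C \<Longrightarrow> \<exists>i<L. vs!i = c" using setvs by (auto simp: in_set_conv_nth)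

lemma rect_C2: assumes "rectangle T R" shows "card (R \<inter> C) \<le> 2"
proof (rule ccontr)
  assume "\<not> card (R \<inter> C) \<le> 2"
  hence "Suc (Suc (Suc 0)) \<le> card (R \<inter> C)" by simp
  then obtain a B1 where B1: "R \<inter> C = insert a B1" "a \<notin> B1" "Suc (Suc 0) \<le> card B1"
    by (metis card_le_Suc_iff)
  then obtain b B2 where B2: "B1 = insert b B2" "b \<notin> B2" "Suc 0 \<le> card B2"
    by (metis card_le_Suc_iff)
  then obtain c B3 where B3: "B2 = insert c B3" "c \<notin> B3"
    by (metis card_le_Suc_iff)
  have abc: "a \<in> R \<inter> C" "b \<in> R \<inter> C" "c \<in> R \<inter> C" "a \<noteq> b" "b \<noteq> c" "a \<noteq> c"
    using B1 B2 B3 by auto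
  have ad: "rc_adj S x y" if "x \<in> R \<inter> C" "y \<in> R \<inter> C" "x \<noteq> y" for x y
    using rectT_S[OF assms, of x y] that CS unfolding rc_adj_def by auto
  obtain i j l where ijl: "i<L" "j<L" "l<L" "vs!i = a" "vs!j = b" "vs!l = c"
    using idx abc by blast
  have "i \<noteq> j" "j \<noteq> l" "i \<noteq> l" using ijl abc by auto
  moreover have "rc_adj S (vs!i) (vs!j)" "rc_adj S (vs!j) (vs!l)" "rc_adj S (vs!i) (vs!l)"
    using ad abc ijl by auto
  ultimately show False using tri[of L i j l] ijl adj len5 by auto
qed

end


context hs begin
lemma Lk: "L = 2*k+1" using len .

lemma cor_T: "t < q \<Longrightarrow> (m+t, n+t) \<in> T" using G_sub by auto

end


context hs begin
lemma isol_upper: assumes iso: "isolated_set T A" shows "card A \<le> k + q"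
proof -
  have AT: "A \<subseteq> T" using iso by (simp add: isolated_set_def)
  have finT: "finite T" by (rule finite_supp)
  have finA: "finite A" using AT finT finite_subset by blast
  have noR: "\<not> rectangle T R" if "x \<in> A" "y \<in> A" "x \<noteq> y" "x \<in> R" "y \<in> R" for x y R
    using iso that unfolding isolated_set_def by blast
  define IA where "IA = {i. i < L \<and> vs!i \<in> A}"
  have AC: "A \<inter> C = nth vs ` IA" using setvs by (auto simp: IA_def in_set_conv_nth image_iff) (metis)
  have cAC: "card (A \<inter> C) = card IA" unfolding AC
    by (rule card_image, rule inj_on_nth[OF dist]) (auto simp: IA_def)
  have "card IA \<le> k"
  proof (rule indep_cycle[OF _ _ Lk])
    show "IA \<subseteq> {..<L}" by (auto simp: IA_def)
    show "\<forall>i\<in>IA. Suc i mod L \<notin> IA"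
    proof (intro ballI notI)
      fix i assume i: "i \<in> IA" and j: "Suc i mod L \<in> IA"
      define j where "j = Suc i mod L"
      have il: "i < L" and jl: "j < L" using i j by (auto simp: IA_def j_def)
      have "j \<noteq> i" using il len5 by (auto simp: j_def modSuc)
      hence ne: "vs!i \<noteq> vs!j" using il jl dist by (simp add: nth_eq_iff_index_eq)
      have "rc_adj S (vs!i) (vs!j)" using adj il jl by (simp add: j_def)
      then obtain R where "rectangle S R" "vs!i \<in> R" "vs!j \<in> R" by (auto simp: rc_adj_def)
      thus False using noR[of "vs!i" "vs!j" R] rectS_T i j ne by (auto simp: IA_def j_def)
    qed
  qed
  hence c1: "card (A \<inter> C) \<le> k" using cAC by simp
  have "card (A - C) \<le> 1 * card (G ` {..<q})"
  proof (rule count_cover)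
    show "finite (G ` {..<q})" by simp
    show "finite (A - C)" using finA by simp
    show "A - C \<subseteq> \<Union> (G ` {..<q})"
    proof
      fix p assume p: "p \<in> A - C"
      hence "p \<in> T" using AT by auto
      then consider "p \<in> S" | "\<exists>t<q. p = (fst (qs!t), n+t) \<or> p = (m+t, snd (qs!t)) \<or> p = (m+t, n+t)"
        using T_iff by blast
      thus "p \<in> \<Union> (G ` {..<q})"
      proof cases
        case 1
        hence "p \<in> set qs" using p Qdef setqs by auto
        then obtain t where "t < q" "p = qs!t" using lenqs by (auto simp: in_set_conv_nth)
        thus ?thesis by (intro UN_I[of t]) (auto simp: prod_eq_iff)
      next
        case 2 thus ?thesis by auto
      qed
    qed
    fix R assume "R \<in> G ` {..<q}"
    then obtain t where t: "t < q" "R = G t" by auto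
    have rt: "rectangle T (G t)" using G_sub[OF t(1)] unfolding rectangle_def by blast
    show "card (R \<inter> (A - C)) \<le> 1"
      using t finA noR[of _ _ "G t"] rt by (auto simp: card_le_Suc0_iff_eq)
  qed
  also have "\<dots> \<le> q" using card_image_le[of "{..<q}" G] by simp
  finally have c2: "card (A - C) \<le> q" .
  have "A = (A \<inter> C) \<union> (A - C)" by auto
  hence "card A \<le> card (A \<inter> C) + card (A - C)" by (metis card_Un_le)
  thus ?thesis using c1 c2 by simp
qed


end


context hs begin
lemma isol_witness: "\<exists>A. isolated_set T A \<and> card A = k + q"
proof -
  define H where "H = (\<lambda>i. vs!(2*i)) ` {..<k}"
  define Cor where "Cor = (\<lambda>t. (m+t, n+t)) ` {..<q}"
  have HC: "H \<subseteq> C" using vsC Lk by (auto simp: H_def)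
  have CorT: "Cor \<subseteq> T" using cor_T by (auto simp: Cor_def)
  have cH: "card H = k" unfolding H_def
  proof (subst card_image)
    show "inj_on (\<lambda>i. vs ! (2 * i)) {..<k}"
    proof (rule inj_onI)
      fix x y assume "x \<in> {..<k}" "y \<in> {..<k}" "vs!(2*x) = vs!(2*y)"
      thus "x = y" using dist Lk by (simp add: nth_eq_iff_index_eq)
    qed
  qed simp
  have cCor: "card Cor = q" unfolding Cor_def by (subst card_image) (auto simp: inj_on_def)
  have disj: "H \<inter> Cor = {}" using HC CS by (auto simp: Cor_def supp_def)
  have iso: "isolated_set T (H \<union> Cor)"
    unfolding isolated_set_def
  proof (intro conjI ballI impI notI)
    show "H \<union> Cor \<subseteq> T" using HC CS ST CorT by auto
    fix x y assume x: "x \<in> H \<union> Cor" and y: "y \<in> H \<union> Cor" and ne: "x \<noteq> y"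
      and "\<exists>R. rectangle T R \<and> x \<in> R \<and> y \<in> R"
    then obtain R where R: "rectangle T R" "x \<in> R" "y \<in> R" by blast
    have corcase: False if h: "x' \<in> Cor" "y' \<in> H \<union> Cor" "x' \<noteq> y'" "x' \<in> R" "y' \<in> R" for x' y'
    proof -
      obtain t where t: "t < q" "x' = (m+t, n+t)" using h(1) by (auto simp: Cor_def)
      have RG: "R \<subseteq> G t" using rect_cor[OF R(1)] t h(4) by auto
      show False
      proof (cases "y' \<in> H")
        case True thus False using HC GC[OF t(1)] RG h(5) by auto
      next
        case False
        then obtain t' where t': "t' < q" "y' = (m+t', n+t')" using h(2) by (auto simp: Cor_def)
        have "t' = t" using G_cor[OF t(1), of t'] RG h(5) t'(2) by blast
        thus False using t(2) t'(2) h(3) by simp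
      qed
    qed
    show False
    proof (cases "x \<in> Cor")
      case True show False using corcase[of x y, OF True y ne R(2) R(3)] .
    next
      case xn: False
      show False
      proof (cases "y \<in> Cor")
        case True show False using corcase[of y x, OF True x ne[symmetric] R(3) R(2)] .
      next
        case False
        have "x \<in> H" "y \<in> H" using xn x y False by simp_all
        then obtain i j where ij: "i < k" "j < k" "x = vs!(2*i)" "y = vs!(2*j)"
          unfolding H_def by (elim imageE) simp
        have "x \<in> S" "y \<in> S" using \<open>x \<in> H\<close> \<open>y \<in> H\<close> HC CS by auto
        then obtain R' where "rectangle S R'" "x \<in> R'" "y \<in> R'" using rectT_S[OF R] by blast
        hence "rc_adj S (vs!(2*i)) (vs!(2*j))" using ne ij \<open>x \<in> S\<close> \<open>y \<in> S\<close> by (auto simp: rc_adj_def)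
        moreover have "2*i < L" "2*j < L" using ij Lk by auto
        ultimately have "2*j = Suc (2*i) mod L \<or> 2*i = Suc (2*j) mod L" using adj[rule_format, of "2*i" "2*j"] by simp
        moreover have "Suc (2*i) mod L = Suc (2*i)" "Suc (2*j) mod L = Suc (2*j)" using ij Lk by (simp_all add: modSuc)
        ultimately have "2*j = Suc (2*i) \<or> 2*i = Suc (2*j)" by simp
        thus False by presburger
      qed
    qed
  qed
  have fH: "finite H" unfolding H_def by simp
  have fCor: "finite Cor" unfolding Cor_def by simp
  have "card (H \<union> Cor) = k + q" using card_Un_disjoint[OF fH fCor disj] cH cCor by simp
  thus ?thesis using iso by blast
qed

end


context hs begin
lemma cover_lower:
  assumes F: "finite F" "\<forall>R\<in>F. rectangle T R" "\<Union>F = T"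
  shows "k + 1 + q \<le> card F"
proof -
  define Cor where "Cor = (\<lambda>t. (m+t, n+t)) ` {..<q}"
  define F1 where "F1 = {R\<in>F. R \<inter> C \<noteq> {}}"
  define F2 where "F2 = {R\<in>F. R \<inter> Cor \<noteq> {}}"
  have cCor: "card Cor = q" unfolding Cor_def by (subst card_image) (auto simp: inj_on_def)
  have RG: "\<exists>t<q. R \<subseteq> G t \<and> R \<inter> Cor \<subseteq> {(m+t,n+t)}" if h: "R \<in> F2" for R
  proof -
    obtain t where t: "t < q" "(m+t,n+t) \<in> R" using h unfolding F2_def Cor_def by blast
    have "rectangle T R" using F(2) h unfolding F2_def by blast
    hence "R \<subseteq> G t" using rect_cor[OF _ t(2) t(1)] by blast
    moreover have "R \<inter> Cor \<subseteq> {(m+t,n+t)}"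
    proof
      fix p assume p: "p \<in> R \<inter> Cor"
      then obtain t' where "t' < q" "p = (m+t', n+t')" unfolding Cor_def by blast
      moreover have "t' = t" using G_cor[OF t(1), of t'] calculation p \<open>R \<subseteq> G t\<close> by blast
      ultimately show "p \<in> {(m+t,n+t)}" by simp
    qed
    ultimately show ?thesis using t by blast
  qed
  have disj: "F1 \<inter> F2 = {}"
  proof (rule ccontr)
    assume "F1 \<inter> F2 \<noteq> {}"
    then obtain R where "R \<in> F1" "R \<in> F2" by blast
    with RG obtain t where "t<q" "R \<subseteq> G t" by blast
    thus False using GC \<open>R \<in> F1\<close> by (auto simp: F1_def)
  qed
  have "card C \<le> 2 * card F1"
  proof (rule count_cover)
    show "finite F1" using F by (simp add: F1_def)
    show "finite C" using setvs by auto
    show "C \<subseteq> \<Union>F1"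
    proof
      fix c assume c: "c \<in> C"
      hence "c \<in> \<Union>F" using F(3) CS ST by auto
      then obtain R where "R \<in> F" "c \<in> R" by blast
      thus "c \<in> \<Union>F1" using c unfolding F1_def by blast
    qed
    fix R assume "R \<in> F1" thus "card (R \<inter> C) \<le> 2" using rect_C2 F by (auto simp: F1_def)
  qed
  hence c1: "k + 1 \<le> card F1" using LC Lk by simp
  have "card Cor \<le> 1 * card F2"
  proof (rule count_cover)
    show "finite F2" using F by (simp add: F2_def)
    show "finite Cor" by (simp add: Cor_def)
    show "Cor \<subseteq> \<Union>F2"
    proof
      fix c assume c: "c \<in> Cor"
      hence "c \<in> \<Union>F" using F(3) cor_T unfolding Cor_def by auto
      then obtain R where "R \<in> F" "c \<in> R" by blast
      thus "c \<in> \<Union>F2" using c unfolding F2_def by blast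
    qed
    fix R assume "R \<in> F2"
    then obtain t where "R \<inter> Cor \<subseteq> {(m+t,n+t)}" using RG by blast
    thus "card (R \<inter> Cor) \<le> 1" using card_mono[of "{(m+t,n+t)}" "R \<inter> Cor"] by simp
  qed
  hence c2: "q \<le> card F2" using cCor by simp
  have "card (F1 \<union> F2) = card F1 + card F2" using disj F by (intro card_Un_disjoint) (auto simp: F1_def F2_def)
  moreover have "card (F1 \<union> F2) \<le> card F" using F by (intro card_mono) (auto simp: F1_def F2_def)
  ultimately show ?thesis using c1 c2 by simp
qed

end


context hs begin
lemma cover_witness: "\<exists>F. finite F \<and> (\<forall>R\<in>F. rectangle T R) \<and> \<Union>F = T \<and> card F \<le> k + 1 + q"
proof -
  define Er where "Er i = (SOME R. rectangle S R \<and> vs!(2*i) \<in> R \<and> vs!(2*i+1) \<in> R)" for i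
  have Er: "rectangle S (Er i) \<and> vs!(2*i) \<in> Er i \<and> vs!(2*i+1) \<in> Er i" if "i < k" for i
  proof -
    have "rc_adj S (vs!(2*i)) (vs!(Suc (2*i)))" using adj that Lk by (simp add: modSuc)
    hence "\<exists>R. rectangle S R \<and> vs!(2*i) \<in> R \<and> vs!(2*i+1) \<in> R" by (auto simp: rc_adj_def)
    thus ?thesis unfolding Er_def by (rule someI_ex)
  qed
  define F where "F = Er ` {..<k} \<union> {{vs!(2*k)}} \<union> G ` {..<q}"
  have fin: "finite F" by (simp add: F_def)
  have rect: "\<forall>R\<in>F. rectangle T R"
  proof
    fix R assume "R \<in> F"
    then consider (a) i where "i < k" "R = Er i" | (b) "R = {vs!(2*k)}" | (c) t where "t<q" "R = G t"
      unfolding F_def by blast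
    thus "rectangle T R"
    proof cases
      case a thus ?thesis using Er rectS_T by auto
    next
      case b
      have "vs!(2*k) \<in> T" using vsC[of "2*k"] Lk CS ST by auto
      moreover have "{vs!(2*k)} = {fst (vs!(2*k))} \<times> {snd (vs!(2*k))}" by auto
      ultimately show ?thesis using b unfolding rectangle_def by blast
    next
      case c thus ?thesis using G_sub unfolding rectangle_def by blast
    qed
  qed
  have un: "\<Union>F = T"
  proof
    show "\<Union>F \<subseteq> T" using rect by (auto simp: rectangle_def)
    show "T \<subseteq> \<Union>F"
    proof
      fix p assume "p \<in> T"
      then consider "p \<in> C" | "p \<in> S - C" | "\<exists>t<q. p = (fst (qs!t), n+t) \<or> p = (m+t, snd (qs!t)) \<or> p = (m+t, n+t)"
        using T_iff by blast
      thus "p \<in> \<Union>F"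
      proof cases
        case 1
        then obtain i where i: "i < L" "p = vs!i" using idx by metis
        show ?thesis
        proof (cases "i = 2*k")
          case True
          hence "p \<in> {vs!(2*k)}" using i by simp
          thus ?thesis unfolding F_def by blast
        next
          case False
          hence ik: "i div 2 < k" using i Lk by presburger
          have "i = 2*(i div 2) \<or> i = 2*(i div 2)+1" by presburger
          hence "p \<in> Er (i div 2)" using Er[OF ik] i by auto
          thus ?thesis using ik unfolding F_def by blast
        qed
      next
        case 2
        hence "p \<in> set qs" using Qdef setqs by auto
        then obtain t where "t < q" "p = qs!t" using lenqs by (auto simp: in_set_conv_nth)
        hence "p \<in> G t" by (auto simp: prod_eq_iff)
        thus ?thesis using \<open>t < q\<close> unfolding F_def by blast
      next
        case 3
        then obtain t where "t < q" "p \<in> G t" by auto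
        thus ?thesis unfolding F_def by blast
      qed
    qed
  qed
  have "card F \<le> card (Er ` {..<k} \<union> {{vs!(2*k)}}) + card (G ` {..<q})"
    unfolding F_def by (rule card_Un_le)
  also have "\<dots> \<le> (card (Er ` {..<k}) + 1) + q"
    using card_Un_le[of "Er ` {..<k}" "{{vs!(2*k)}}"] card_image_le[of "{..<q}" G] by simp
  also have "\<dots> \<le> k + 1 + q" using card_image_le[of "{..<k}" Er] by simp
  finally show ?thesis using fin rect un by blast
qed

end



theorem mainTheorem9:
  fixes m n k :: nat and X :: "nat \<Rightarrow> nat \<Rightarrow> bool" and C Q :: "(nat \<times> nat) set"
  assumes "odd_hole (supp m n X) C"
    and "card C = 2 * k + 1"
    and "Q = supp m n X - C"
    and "Q \<noteq> {}"
  shows "isol_num (supp (m + card Q) (n + card Q) (stretch m n X Q)) = k + card Q \<and>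
         rect_cover_num (supp (m + card Q) (n + card Q) (stretch m n X Q)) = k + 1 + card Q \<and>
         \<not> firm (m + card Q) (n + card Q) (stretch m n X Q)"
proof -
  from assms(1) obtain vs where vs: "distinct vs" "set vs = C" "C \<subseteq> supp m n X"
    "5 \<le> length vs"
    "\<forall>i < length vs. \<forall>j < length vs. rc_adj (supp m n X) (vs ! i) (vs ! j) \<longleftrightarrow>
           (j = Suc i mod length vs \<or> i = Suc j mod length vs)"
    unfolding odd_hole_def by blast
  have len: "length vs = 2*k+1" using distinct_card[OF vs(1)] vs(2) assms(2) by simp
  interpret hs m n X C Q k vs
    using vs len assms(3) by unfold_locales auto
  have finT: "finite T" by (rule finite_supp)
  have I: "isol_num T = k + q"
    unfolding isol_num_def
  proof (rule Max_eqI)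
    have "{card A |A. isolated_set T A} \<subseteq> card ` Pow T" by (auto simp: isolated_set_def)
    thus "finite {card A |A. isolated_set T A}" by (rule finite_subset) (use finT in simp)
    fix y assume "y \<in> {card A |A. isolated_set T A}"
    then obtain A where "y = card A" "isolated_set T A" by blast
    thus "y \<le> k + q" using isol_upper by simp
  next
    obtain A0 where A0: "isolated_set T A0" "card A0 = k+q" using isol_witness by blast
    show "k + q \<in> {card A |A. isolated_set T A}" using A0 by (intro CollectI exI[of _ A0]) simp
  qed
  have R: "rect_cover_num T = k + 1 + q"
    unfolding rect_cover_num_def
  proof (rule Min_eqI)
    have "{card F |F. finite F \<and> (\<forall>R\<in>F. rectangle T R) \<and> \<Union> F = T} \<subseteq> card ` Pow (Pow T)"
    proof
      fix x assume "x \<in> {card F |F. finite F \<and> (\<forall>R\<in>F. rectangle T R) \<and> \<Union> F = T}"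
      then obtain F where F: "x = card F" "\<forall>R\<in>F. rectangle T R" by blast
      have "F \<in> Pow (Pow T)" using F(2) unfolding rectangle_def by blast
      thus "x \<in> card ` Pow (Pow T)" using F(1) by blast
    qed
    thus "finite {card F |F. finite F \<and> (\<forall>R\<in>F. rectangle T R) \<and> \<Union> F = T}" by (rule finite_subset) (use finT in simp)
    fix y assume "y \<in> {card F |F. finite F \<and> (\<forall>R\<in>F. rectangle T R) \<and> \<Union> F = T}"
    then obtain F where "y = card F" "finite F" "\<forall>R\<in>F. rectangle T R" "\<Union> F = T" by blast
    thus "k + 1 + q \<le> y" using cover_lower by simp
  next
    obtain F where F: "finite F" "\<forall>R\<in>F. rectangle T R" "\<Union>F = T" "card F \<le> k + 1 + q"
      using cover_witness by blast
    have "card F = k + 1 + q" using cover_lower[OF F(1-3)] F(4) by simp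
    thus "k + 1 + q \<in> {card F |F. finite F \<and> (\<forall>R\<in>F. rectangle T R) \<and> \<Union> F = T}"
      using F by (intro CollectI exI[of _ F]) simp
  qed
  have nf: "\<not> firm (m + q) (n + q) (stretch m n X Q)"
  proof
    assume "firm (m + q) (n + q) (stretch m n X Q)"
    hence "isol_num (T \<inter> ({..<m+q} \<times> {..<n+q})) = rect_cover_num (T \<inter> ({..<m+q} \<times> {..<n+q}))"
      unfolding firm_def by blast
    moreover have "T \<inter> ({..<m+q} \<times> {..<n+q}) = T" by (auto simp: supp_def)
    ultimately show False using I R by simp
  qed
  show ?thesis using I R nf by blast
qed



end
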